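(* Let $k,m\in\mathbb{N}$ with $m<k\le 2m$, $k$ even, and $\gcd(2k+1,2(2m+1))=1$; let $a>0$ satisfy $\frac{1}{4km+3k+m+1}\le\frac{a}{2k+1}\le\frac{1}{4km+k+3m+1}$. For $s=0,\dots,4m+1$, $n=0,\dots,2k$ define $X_{sn}=\frac{s}{2(2m+1)}-\frac{n}{2k+1}$, $\Phi_{sn}=\sum_{l\in\mathbb{Z}}Q_2\big(2a(2m+1)(l+X_{sn})\big)$ with $Q_2(x)=(1-|x|)\chi_{[-1,1]}(x)$, and $A_{sn}=\Phi_{sn}-\Phi_{s,2k+1-n}$ for $n=1,\dots,k$. Then $A_{mn}=A_{m+1,n}$ for all $n=1,\dots,k$. *)

theory Defs
  imports "HOL-Analysis.Analysis"
begin

definition Q2 :: "real \<Rightarrow> real" where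
  "Q2 x = (if \<bar>x\<bar> \<le> 1 then 1 - \<bar>x\<bar> else 0)"

definition Xsn :: "nat \<Rightarrow> nat \<Rightarrow> nat \<Rightarrow> nat \<Rightarrow> real" where
  "Xsn k m s n = real s / (2 * (2 * real m + 1)) - real n / (2 * real k + 1)"

text \<open>Phi_{sn} = sum over all integers l of Q2(2a(2m+1)(l + X_{sn})); the summand is
  finitely supported, so the set-indexed sum infsum over the integers is the ordinary sum.\<close>
definition Phi :: "real \<Rightarrow> nat \<Rightarrow> nat \<Rightarrow> nat \<Rightarrow> nat \<Rightarrow> real" where
  "Phi a k m s n = (\<Sum>\<^sub>\<infinity>l::int. Q2 (2 * a * (2 * real m + 1) * (real_of_int l + Xsn k m s n)))"

definition Asn :: "real \<Rightarrow> nat \<Rightarrow> nat \<Rightarrow> nat \<Rightarrow> nat \<Rightarrow> real" where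
  "Asn a k m s n = Phi a k m s n - Phi a k m s (2 * k + 1 - n)"

end

theory Submission
  imports Defs
begin

lemma single_term:
  fixes c x d :: real and j :: int
  assumes "c > 0" "c*(1/2+d) \<ge> 1" "c*(1/2-d) \<le> 1" "\<bar>x - j\<bar> \<le> 1/2 - d"
  shows "(\<Sum>\<^sub>\<infinity>l::int. Q2 (c*(of_int l + x))) = 1 - c*\<bar>x-j\<bar>"
proof -
  have "(\<Sum>\<^sub>\<infinity>l::int. Q2 (c*(of_int l + x))) = (\<Sum>\<^sub>\<infinity>l\<in>{-j}. Q2 (c*(of_int l + x)))"
  proof (rule infsum_cong_neutral)
    fix l :: int assume "l \<in> UNIV - {-j}"
    then have "l + j \<noteq> 0" by auto
    then have "\<bar>real_of_int (l + j)\<bar> \<ge> 1" by linarith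
    then have "\<bar>of_int l + x\<bar> \<ge> 1/2 + d" using assms(4) by (simp add: abs_if split: if_splits) linarith?
    then have "c * \<bar>of_int l + x\<bar> \<ge> 1" using assms(1,2)
      by (meson mult_left_mono less_imp_le order_trans)
    then show "Q2 (c*(of_int l + x)) = 0" using assms(1)
      by (auto simp: Q2_def abs_mult)
  qed auto
  also have "\<dots> = Q2 (c*(x - j))" by simp
  also have "\<dots> = 1 - c*\<bar>x-j\<bar>"
  proof -
    have "c*\<bar>x-j\<bar> \<le> c*(1/2-d)" using assms by (simp add: mult_left_mono)
    then have "c*\<bar>x-j\<bar> \<le> 1" using assms(3) by linarith
    then show ?thesis using assms(1) by (simp add: Q2_def abs_mult)
  qed
  finally show ?thesis .
qed

definition FF :: "real \<Rightarrow> real \<Rightarrow> real" where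
  "FF c x = (\<Sum>\<^sub>\<infinity>l::int. Q2 (c*(of_int l + x)))"

definition DD :: "real \<Rightarrow> real" where
  "DD z = min (frac z) (1 - frac z)"

lemma DD_plus1: "DD (z + 1) = DD z"
  by (simp add: DD_def frac_1_eq)

lemma DD_minus1: "DD (z - 1) = DD z"
  using DD_plus1[of "z - 1"] by simp

lemma key:
  fixes c d z :: real
  assumes c: "c > 0" "c*(1/2+d) \<ge> 1" "c*(1/2-d) \<le> 1"
    and av: "\<forall>j::int. d \<le> \<bar>z - of_int j / 2\<bar>"
  shows "FF c z = 1 - c * DD z \<and> FF c (1/2 - z) = 1 - c * (1/2 - DD z)"
proof -
  define f where "f = floor z"
  define e where "e = frac z"
  have ze: "z = of_int f + e" by (simp add: f_def e_def frac_def)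
  have e01: "0 \<le> e" "e < 1" by (auto simp: e_def frac_lt_1)
  have a1: "d \<le> \<bar>e\<bar>" using av[rule_format, of "2*f"] ze by simp
  have a2: "d \<le> \<bar>e - 1/2\<bar>" using av[rule_format, of "2*f+1"] ze by (simp add: field_simps)
  have a3: "d \<le> \<bar>e - 1\<bar>" using av[rule_format, of "2*f+2"] ze by (simp add: field_simps)
  show ?thesis
  proof (cases "e \<le> 1/2")
    case True
    then have ea: "d \<le> e" "e \<le> 1/2 - d" using a1 a2 e01 by auto
    have D: "DD z = e" using True by (simp add: DD_def e_def[symmetric])
    have "FF c z = 1 - c * \<bar>z - of_int f\<bar>" unfolding FF_def
      by (rule single_term[OF c]) (use ze ea in simp)
    moreover have "FF c (1/2 - z) = 1 - c * \<bar>(1/2 - z) - of_int (-f)\<bar>" unfolding FF_def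
      by (rule single_term[OF c]) (use ze ea in simp)
    ultimately show ?thesis using ze ea D e01 True by (simp add: abs_if)
  next
    case False
    then have ea: "1/2 + d \<le> e" "e \<le> 1 - d" using a2 a3 e01 by auto
    have D: "DD z = 1 - e" using False by (simp add: DD_def e_def[symmetric])
    have "FF c z = 1 - c * \<bar>z - of_int (f+1)\<bar>" unfolding FF_def
      by (rule single_term[OF c]) (use ze ea in simp)
    moreover have "FF c (1/2 - z) = 1 - c * \<bar>(1/2 - z) - of_int (-f)\<bar>" unfolding FF_def
      by (rule single_term[OF c]) (use ze ea in simp)
    ultimately show ?thesis using ze ea D e01 False by (simp add: abs_if)
  qed
qed


lemma avoid_int:
  fixes k m :: nat and T j :: int
  assumes "m < k" "k \<le> 2*m"
  shows "int k - int m \<le> \<bar>int m * (2*int k+1) + (2*int m+1)*T - j*(2*int m+1)*(2*int k+1)\<bar>"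
proof (rule ccontr)
  define r where "r = int m * (2*int k+1) + (2*int m+1)*T - j*(2*int m+1)*(2*int k+1)"
  define q where "q = int k + T - j*(2*int k+1)"
  assume "\<not> ?thesis"
  then have r0: "\<bar>r\<bar> < int k - int m" by (simp add: r_def)
  then have r: "r < int k - int m" "- r < int k - int m" by linarith+
  have rq: "r + (int k - int m) = (2*int m+1)*q" by (simp add: r_def q_def algebra_simps)
  show False
  proof (cases "q \<ge> 1")
    case True
    then have "(2*int m+1)*q \<ge> (2*int m+1)*1" by (intro mult_left_mono) auto
    then have "r + (int k - int m) \<ge> 2*int m + 1" using rq by simp
    moreover have "int k \<le> 2*int m" using assms by simp
    ultimately show False using r by linarith
  next
    case False
    then have "q \<le> 0" by simp
    then have "(2*int m+1)*q \<le> 0" by (simp add: mult_nonneg_nonpos)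
    then show False using rq r by linarith
  qed
qed

lemma avoid:
  fixes k m :: nat and T :: int
  assumes "m < k" "k \<le> 2*m"
  shows "\<forall>j::int. (real k - real m) / (2*(2*real m+1)*(2*real k+1)) \<le>
     \<bar>(real m * (2*real k+1) + (2*real m+1) * of_int T) / (2*(2*real m+1)*(2*real k+1)) - of_int j / 2\<bar>"
proof
  fix j :: int
  define P where "P = 2*(2*real m+1)*(2*real k+1)"
  have P: "P > 0" by (simp add: P_def)
  have i: "real k - real m \<le> \<bar>real m * (2*real k+1) + (2*real m+1) * of_int T - of_int j*(2*real m+1)*(2*real k+1)\<bar>"
    using avoid_int[OF assms, of T j] by (metis (mono_tags, opaque_lifting) of_int_le_iff of_int_abs of_int_diff of_int_of_nat_eq of_int_mult of_int_add of_int_1 of_int_numeral)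
  have "(real m * (2*real k+1) + (2*real m+1) * of_int T) / P - of_int j / 2
      = (real m * (2*real k+1) + (2*real m+1) * of_int T - of_int j*(2*real m+1)*(2*real k+1)) / P"
    using P by (simp add: P_def field_simps)
  then have "\<bar>(real m * (2*real k+1) + (2*real m+1) * of_int T) / P - of_int j / 2\<bar>
      = \<bar>real m * (2*real k+1) + (2*real m+1) * of_int T - of_int j*(2*real m+1)*(2*real k+1)\<bar> / P"
    using P by simp
  then show "(real k - real m) / P \<le> \<bar>(real m * (2*real k+1) + (2*real m+1) * of_int T) / P - of_int j / 2\<bar>"
    using i P by (simp add: divide_right_mono)
qed


lemma Phi_FF: "Phi a k m s n = FF (2 * a * (2 * real m + 1)) (Xsn k m s n)"
  by (simp add: Phi_def FF_def)

theorem lemma3p13: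
  fixes k m :: nat and a :: real
  assumes "m < k" and "k \<le> 2 * m" and "even k"
    and "gcd (2 * k + 1) (2 * (2 * m + 1)) = 1"
    and "a > 0"
    and "1 / real (4 * k * m + 3 * k + m + 1) \<le> a / real (2 * k + 1)"
    and "a / real (2 * k + 1) \<le> 1 / real (4 * k * m + k + 3 * m + 1)"
  shows "\<forall>n \<in> {1..k}. Asn a k m m n = Asn a k m (m + 1) n"
proof
  fix n assume n: "n \<in> {1..k}"
  define M where "M = 2 * real m + 1"
  define K where "K = 2 * real k + 1"
  define c where "c = 2 * a * M"
  define d where "d = (real k - real m) / (2*M*K)"
  have M0: "M > 0" and K0: "K > 0" by (simp_all add: M_def K_def)
  have e1: "real (4 * k * m + 3 * k + m + 1) = K*M + (real k - real m)"
    by (simp add: K_def M_def algebra_simps)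
  have e2: "real (4 * k * m + k + 3 * m + 1) = K*M - (real k - real m)"
    using assms(1) by (simp add: K_def M_def algebra_simps)
  have kmpos: "real k - real m > 0" using assms(1) by simp
  have p2: "K*M - (real k - real m) > 0"
  proof -
    have "real k - real m \<le> real k" by simp
    moreover have "real k < K*M" unfolding K_def M_def by (simp add: algebra_simps) (smt (verit) of_nat_0_le_iff mult_nonneg_nonneg)
    ultimately show ?thesis by linarith
  qed
  have rK: "real (2*k+1) = K" by (simp add: K_def)
  have X1: "K*M + (real k - real m) > 0" using K0 M0 kmpos by (simp add: add_pos_pos)
  have h6: "1 / (K*M + (real k - real m)) \<le> a / K" using assms(6) unfolding e1 rK .
  have h7: "a / K \<le> 1 / (K*M - (real k - real m))" using assms(7) unfolding e2 rK .
  have lo: "K \<le> a * (K*M + (real k - real m))"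
    using h6 X1 K0 by (simp add: divide_le_eq le_divide_eq field_simps)
  have hi: "a * (K*M - (real k - real m)) \<le> K"
    using h7 p2 K0 by (simp add: divide_le_eq le_divide_eq field_simps)
  have c1: "c > 0" using assms(5) M0 by (simp add: c_def)
  have "c*(1/2+d) = a * (K*M + (real k - real m)) / K"
    using M0 K0 by (simp add: c_def d_def field_simps)
  then have c2: "c*(1/2+d) \<ge> 1" using lo K0 by simp
  have "c*(1/2-d) = a * (K*M - (real k - real m)) / K"
    using M0 K0 by (simp add: c_def d_def field_simps)
  then have c3: "c*(1/2-d) \<le> 1" using hi K0 by simp
  define z1 where "z1 = (real m * K + M * of_int (- 2 * int n)) / (2*M*K)"
  define z2 where "z2 = (real m * K + M * of_int (2 * int n)) / (2*M*K)"
  have D: "2*M*K > 0" using M0 K0 by simp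
  have zz1: "z1 + 1 = (real m * K + M * of_int (2 * (2*int k+1) - 2 * int n)) / (2*M*K)"
  proof -
    have "z1 + 1 = (real m * K + M * of_int (- 2 * int n) + 2*M*K) / (2*M*K)"
      using M0 K0 by (simp add: z1_def field_simps)
    also have "real m * K + M * of_int (- 2 * int n) + 2*M*K = real m * K + M * of_int (2 * (2*int k+1) - 2 * int n)"
      by (simp add: K_def algebra_simps)
    finally show ?thesis .
  qed
  have zz2: "z2 - 1 = (real m * K + M * of_int (2 * int n - 2 * (2*int k+1))) / (2*M*K)"
  proof -
    have "z2 - 1 = (real m * K + M * of_int (2 * int n) - 2*M*K) / (2*M*K)"
      using M0 K0 by (simp add: z2_def field_simps)
    also have "real m * K + M * of_int (2 * int n) - 2*M*K = real m * K + M * of_int (2 * int n - 2 * (2*int k+1))"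
      by (simp add: K_def algebra_simps)
    finally show ?thesis .
  qed
  have av: "\<forall>j::int. d \<le> \<bar>(real m * K + M * of_int T) / (2*M*K) - of_int j / 2\<bar>" for T
    using avoid[OF assms(1,2), of T] by (simp add: d_def M_def K_def)
  note k1 = key[OF c1 c2 c3 av[of "- 2 * int n", folded z1_def]]
  note k2 = key[OF c1 c2 c3 av[of "2 * int n", folded z2_def]]
  note k3 = key[OF c1 c2 c3 av[of "2 * (2*int k+1) - 2 * int n", folded zz1]]
  note k4 = key[OF c1 c2 c3 av[of "2 * int n - 2 * (2*int k+1)", folded zz2]]
  have nk: "n \<le> 2*k+1" using n by simp
  have xs: "Xsn k m s j = real s / (2*M) - real j / K" for s j
    by (simp add: Xsn_def M_def K_def)
  have rn: "real (2*k+1-n) = K - real n" using nk by (simp add: K_def of_nat_diff)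
  have rm: "real (m+1) = (M + 1) / 2" by (simp add: M_def)
  have x1: "Xsn k m m n = z1"
    unfolding xs z1_def using M0 K0 by (simp add: field_simps)
  have x2: "Xsn k m m (2*k+1-n) = z2 - 1"
    unfolding xs z2_def rn using M0 K0 by (simp add: field_simps)
  have x3: "Xsn k m (m+1) n = 1/2 - z2"
    unfolding xs z2_def rm using M0 K0 by (simp add: field_simps) (simp add: M_def algebra_simps)
  have x4: "Xsn k m (m+1) (2*k+1-n) = 1/2 - (z1 + 1)"
    unfolding xs z1_def rm rn using M0 K0 by (simp add: field_simps) (simp add: M_def algebra_simps)
  have cc: "2 * a * (2 * real m + 1) = c" by (simp add: c_def M_def)
  show "Asn a k m m n = Asn a k m (m + 1) n"
    unfolding Asn_def Phi_FF cc x1 x2 x3 x4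
    using k1 k2 k3 k4 DD_plus1[of z1] DD_minus1[of z2] by (simp add: algebra_simps)
qed

end
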